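(* Let $n\ge 2$ and $x_0\in\mathbb{R}$. Then $$\psi(x_0+iy)=A\,|y|\,(1+o(1)),\qquad y\to 0,\ y\neq 0,$$ where $$A=\int_{\widetilde D_{x_0}}\left|\sum_{k=1}^{n-1}k(k+1)t_kx_0^{k-1}\right|^2dt_1\dots dt_{n-1},$$ and $\widetilde D_{x_0}$ is the set of $(t_1,\dots,t_{n-1})\in\mathbb{R}^{n-1}$ with $\max_{1\le k\le n-1}|t_k|\le1$, $\left|\sum_{k=1}^{n-1}kt_kx_0^{k+1}\right|\le1$ and $\left|\sum_{k=1}^{n-1}(k+1)t_kx_0^{k}\right|\le1$.
   Context: For $z\in\mathbb{C}\setminus\mathbb{R}$, let $D_z$ be the set of $(t_1,\dots,t_{n-1})\in\mathbb{R}^{n-1}$ with $\max_{1\le k\le n-1}|t_k|\le 1$, $\left|z\sum_{k=1}^{n-1}t_k\left(z^k-\frac{\Im z^{k+1}}{\Im z}\right)\right|\le 1$ and $\left|\frac{1}{\Im z}\sum_{k=1}^{n-1}t_k\Im z^{k+1}\right|\le 1$, and define $$\psi(z)=\frac{1}{|\Im z|}\int_{D_z}\left|\sum_{k=1}^{n-1}t_k\left((k+1)z^{k}-\frac{\Im z^{k+1}}{\Im z}\right)\right|^2dt_1\dots dt_{n-1}.$$ *)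

theory Defs
  imports "HOL-Analysis.Analysis" "HOL-Library.Landau_Symbols"
begin

text \<open>Points of R^(n-1) are functions nat => real, coordinates indexed by k in {1..n-1};
  Lebesgue measure on R^(n-1) is the product measure PiM {1..n-1} (lambda _. lborel).\<close>

definition lebRn :: "nat \<Rightarrow> (nat \<Rightarrow> real) measure" where
  "lebRn n = PiM {1..n-1} (\<lambda>_. lborel)"

definition Dz :: "nat \<Rightarrow> complex \<Rightarrow> (nat \<Rightarrow> real) set" where
  "Dz n z = {t \<in> space (lebRn n).
      (\<forall>k\<in>{1..n-1}. \<bar>t k\<bar> \<le> 1) \<and>
      cmod (z * (\<Sum>k=1..n-1. complex_of_real (t k) *
                 (z ^ k - complex_of_real (Im (z ^ (k+1)) / Im z)))) \<le> 1 \<and>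
      \<bar>(1 / Im z) * (\<Sum>k=1..n-1. t k * Im (z ^ (k+1)))\<bar> \<le> 1}"

definition psi :: "nat \<Rightarrow> complex \<Rightarrow> real" where
  "psi n z = (1 / \<bar>Im z\<bar>) *
     (\<integral>t. indicator (Dz n z) t *
        (cmod (\<Sum>k=1..n-1. complex_of_real (t k) *
           (of_nat (k+1) * z ^ k - complex_of_real (Im (z ^ (k+1)) / Im z))))\<^sup>2 \<partial>lebRn n)"

definition Dtilde :: "nat \<Rightarrow> real \<Rightarrow> (nat \<Rightarrow> real) set" where
  "Dtilde n x0 = {t \<in> space (lebRn n).
      (\<forall>k\<in>{1..n-1}. \<bar>t k\<bar> \<le> 1) \<and>
      \<bar>\<Sum>k=1..n-1. real k * t k * x0 ^ (k+1)\<bar> \<le> 1 \<and>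
      \<bar>\<Sum>k=1..n-1. real (k+1) * t k * x0 ^ k\<bar> \<le> 1}"

definition Aconst :: "nat \<Rightarrow> real \<Rightarrow> real" where
  "Aconst n x0 = (\<integral>t. indicator (Dtilde n x0) t *
      (\<bar>\<Sum>k=1..n-1. real k * real (k+1) * t k * x0 ^ (k-1)\<bar>)\<^sup>2 \<partial>lebRn n)"

end

theory Submission
  imports Defs
begin


definition EE :: "nat \<Rightarrow> complex \<Rightarrow> complex \<Rightarrow> complex" where
  "EE k z w = (\<Sum>i<k+1. w^(k-i) * z^i)"
definition FF :: "nat \<Rightarrow> complex \<Rightarrow> complex \<Rightarrow> complex" where
  "FF k z w = (\<Sum>i<k+1. z^i * (\<Sum>m<k-i. w^(k-i-Suc m) * z^m))"

lemma EE_eq: "z^(k+1) - w^(k+1) = (z - w) * EE k z w"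
  unfolding EE_def using power_diff_sumr2[of z "k+1" w] by simp

lemma FF_eq: "of_nat (k+1) * z^k - EE k z w = (z - w) * FF k z w"
proof -
  have "of_nat (k+1) * z^k - EE k z w = (\<Sum>i<k+1. z^i * (z^(k-i) - w^(k-i)))"
    unfolding EE_def
    by (simp add: sum_subtractf algebra_simps power_add[symmetric] del: of_nat_Suc)
  also have "\<dots> = (\<Sum>i<k+1. (z - w) * (z^i * (\<Sum>m<k-i. w^(k-i-Suc m) * z^m)))"
    by (intro sum.cong refl) (simp add: power_diff_sumr2[of z "k - _" w] algebra_simps)
  also have "\<dots> = (z - w) * FF k z w" unfolding FF_def by (simp add: sum_distrib_left)
  finally show ?thesis .
qed

lemma EE_same: "EE k x x = of_nat (k+1) * x^k"
  unfolding EE_def by (simp add: power_add[symmetric])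

lemma sum_rev_gauss: "(\<Sum>i<k+1. real (k - i)) = real k * (real k + 1) / 2"
proof -
  have "(\<Sum>i<k+1. real (k - i)) = (\<Sum>i<k+1. real i)"
    using sum.nat_diff_reindex[of "\<lambda>i. real i" "k+1"] by simp
  also have "\<dots> = real k * (real k + 1) / 2"
    by (induction k) (auto simp: field_simps)
  finally show ?thesis .
qed

lemma FF_same: "FF k (of_real x) (of_real x) = of_real (real k * (real k + 1) / 2 * x^(k-1))"
proof -
  have "FF k (of_real x) (of_real x) = (\<Sum>i<k+1. of_real (real (k - i) * x^(k-1)))"
    unfolding FF_def
  proof (intro sum.cong refl)
    fix i assume i: "i \<in> {..<k+1}"
    have "(\<Sum>m<k-i. (of_real x::complex)^(k-i-Suc m) * of_real x^m) = (\<Sum>m<k-i. of_real x ^ (k-i-1))"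
      by (intro sum.cong refl) (auto simp: power_add[symmetric])
    then show "of_real x ^ i * (\<Sum>m<k-i. of_real x^(k-i-Suc m) * of_real x^m) = complex_of_real (real (k - i) * x^(k-1))"
      using i by (cases "i < k") (auto simp: power_add[symmetric])
  qed
  also have "\<dots> = of_real ((\<Sum>i<k+1. real (k - i)) * x^(k-1))"
    by (simp add: sum_distrib_right)
  also have "\<dots> = of_real (real k * (real k + 1) / 2 * x^(k-1))"
    by (simp only: sum_rev_gauss)
  finally show ?thesis .
qed

lemma Im_ratio: assumes "Im z \<noteq> 0"
  shows "complex_of_real (Im (z^(k+1)) / Im z) = EE k z (cnj z)"
proof -
  have a: "z - cnj z = complex_of_real (2 * Im z) * \<i>" by (rule complex_diff_cnj)
  have b: "z^(k+1) - cnj z^(k+1) = complex_of_real (2 * Im (z^(k+1))) * \<i>"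
    using complex_diff_cnj[of "z^(k+1)"] by simp
  have "z - cnj z \<noteq> 0" using a assms by simp
  then have "EE k z (cnj z) = (z^(k+1) - cnj z^(k+1)) / (z - cnj z)"
    using EE_eq[of z k "cnj z"] by (simp add: field_simps)
  also have "\<dots> = complex_of_real (Im (z^(k+1)) / Im z)"
    unfolding a b using assms by (simp add: field_simps)
  finally show ?thesis by simp
qed



lemma zlim: "((\<lambda>y. Complex x0 y) \<longlongrightarrow> of_real x0) (at (0::real))"
proof -
  have "((\<lambda>y. Complex x0 y) \<longlongrightarrow> Complex x0 0) (at (0::real))"
    by (intro tendsto_intros)
  moreover have "Complex x0 0 = of_real x0" by (simp add: complex_eq_iff)
  ultimately show ?thesis by simp
qed

lemma wlim: "((\<lambda>y. cnj (Complex x0 y)) \<longlongrightarrow> of_real x0) (at (0::real))"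
  using tendsto_cnj[OF zlim[of x0]] by simp

lemma FFlim: "((\<lambda>y. FF k (Complex x0 y) (cnj (Complex x0 y))) \<longlongrightarrow> FF k (of_real x0) (of_real x0)) (at 0)"
  unfolding FF_def by (intro tendsto_intros zlim wlim)

lemma EElim: "((\<lambda>y. EE k (Complex x0 y) (cnj (Complex x0 y))) \<longlongrightarrow> EE k (of_real x0) (of_real x0)) (at 0)"
  unfolding EE_def by (intro tendsto_intros zlim wlim)

lemma S_eq:
  assumes "y \<noteq> 0"
  shows "(\<Sum>k=1..n-1. complex_of_real (t k) *
           (of_nat (k+1) * Complex x0 y ^ k - complex_of_real (Im (Complex x0 y ^ (k+1)) / Im (Complex x0 y))))
       = of_real y * (\<Sum>k=1..n-1. complex_of_real (t k) * (2 * \<i> * FF k (Complex x0 y) (cnj (Complex x0 y))))"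
proof -
  let ?z = "Complex x0 y"
  have "of_nat (k+1) * ?z ^ k - complex_of_real (Im (?z ^ (k+1)) / Im ?z) = of_real y * (2 * \<i> * FF k ?z (cnj ?z))" for k
  proof -
    have "of_nat (k+1) * ?z ^ k - complex_of_real (Im (?z ^ (k+1)) / Im ?z) = (?z - cnj ?z) * FF k ?z (cnj ?z)"
      using Im_ratio[of ?z k] assms FF_eq[of k ?z "cnj ?z"] by simp
    also have "?z - cnj ?z = of_real (2*y) * \<i>" using complex_diff_cnj[of ?z] by simp
    finally show ?thesis by simp
  qed
  then show ?thesis by (simp add: sum_distrib_left algebra_simps)
qed

lemma H_val: "(\<Sum>k=1..n-1. complex_of_real (t k) * (2 * \<i> * FF k (of_real x0) (of_real x0)))
   = \<i> * of_real (\<Sum>k=1..n-1. real k * real (k+1) * t k * x0 ^ (k-1))"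
proof -
  have "(\<Sum>k=1..n-1. complex_of_real (t k) * (2 * \<i> * FF k (of_real x0) (of_real x0)))
      = (\<Sum>k=1..n-1. \<i> * of_real (real k * real (k+1) * t k * x0 ^ (k-1)))"
    by (intro sum.cong refl) (simp add: FF_same field_simps)
  then show ?thesis by (simp add: sum_distrib_left)
qed

lemma a_val: "cmod (of_real x0 * (\<Sum>k=1..n-1. complex_of_real (t k) * (of_real x0 ^ k - EE k (of_real x0) (of_real x0))))
   = \<bar>\<Sum>k=1..n-1. real k * t k * x0 ^ (k+1)\<bar>"
proof -
  have "of_real x0 * (\<Sum>k=1..n-1. complex_of_real (t k) * (of_real x0 ^ k - EE k (of_real x0) (of_real x0)))
     = of_real (- (\<Sum>k=1..n-1. real k * t k * x0 ^ (k+1)))"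
    by (simp add: EE_same sum_distrib_left sum_negf[symmetric] del: of_nat_Suc)
       (intro sum.cong refl, simp add: algebra_simps)
  then show ?thesis by (simp only: norm_of_real abs_minus_cancel)
qed

lemma b_val: "(\<Sum>k=1..n-1. t k * Re (EE k (of_real x0) (of_real x0))) = (\<Sum>k=1..n-1. real (k+1) * t k * x0 ^ k)"
  by (intro sum.cong refl) (simp add: EE_same del: of_nat_Suc)



lemma hyperplane_null:
  fixes c :: "nat \<Rightarrow> real" and J :: "nat set" and i :: nat and v :: real
  assumes J: "finite J" "i \<notin> J" and ci: "c i \<noteq> 0"
  shows "{t \<in> space (PiM (insert i J) (\<lambda>_. lborel)). (\<Sum>k\<in>insert i J. c k * t k) = v}
           \<in> null_sets (PiM (insert i J) (\<lambda>_. lborel))"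
proof -
  let ?M = "PiM (insert i J) (\<lambda>_. lborel :: real measure)"
  let ?S = "{t \<in> space ?M. (\<Sum>k\<in>insert i J. c k * t k) = v}"
  have S: "?S \<in> sets ?M" by measurable
  interpret product_sigma_finite "\<lambda>_. lborel :: real measure"
    by (simp add: product_sigma_finite_def lborel.sigma_finite_measure_axioms)
  have "emeasure ?M ?S = (\<integral>\<^sup>+t. indicator ?S t \<partial>?M)"
    using S by simp
  also have "\<dots> = (\<integral>\<^sup>+ x. (\<integral>\<^sup>+ y. indicator ?S (x(i := y)) \<partial>lborel) \<partial>(PiM J (\<lambda>_. lborel)))"
    using S J by (intro product_nn_integral_insert) auto
  also have "\<dots> = (\<integral>\<^sup>+ x. 0 \<partial>(PiM J (\<lambda>_. lborel :: real measure)))"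
  proof (rule nn_integral_cong)
    fix x assume x: "x \<in> space (PiM J (\<lambda>_. lborel :: real measure))"
    define a where "a = (v - (\<Sum>k\<in>J. c k * x k)) / c i"
    have "indicator ?S (x(i := y)) = (indicator {a} y :: ennreal)" for y
    proof -
      have sp: "x(i := y) \<in> space ?M" using x by (auto simp: space_PiM PiE_def extensional_def)
      have "(\<Sum>k\<in>insert i J. c k * (x(i := y)) k) = c i * y + (\<Sum>k\<in>J. c k * x k)"
        using J by (simp add: sum.insert) (intro sum.cong, auto)
      then have "((\<Sum>k\<in>insert i J. c k * (x(i := y)) k) = v) \<longleftrightarrow> y = a"
        using ci unfolding a_def by (auto simp: field_simps)
      then show ?thesis using sp by (simp add: indicator_def)
    qed
    then show "(\<integral>\<^sup>+ y. indicator ?S (x(i := y)) \<partial>lborel) = 0"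
      by simp
  qed
  also have "\<dots> = 0" by simp
  finally show ?thesis using S by (simp add: null_sets_def)
qed



lemma pointwise:
  fixes t :: "nat \<Rightarrow> real"
  assumes t: "t \<in> space (lebRn n)"
    and L1: "\<bar>\<Sum>k=1..n-1. real k * t k * x0 ^ (k+1)\<bar> \<noteq> 1"
    and L2: "\<bar>\<Sum>k=1..n-1. real (k+1) * t k * x0 ^ k\<bar> \<noteq> 1"
  shows "((\<lambda>y. indicator (Dz n (Complex x0 y)) t *
        (cmod (\<Sum>k=1..n-1. complex_of_real (t k) *
           (of_nat (k+1) * Complex x0 y ^ k - complex_of_real (Im (Complex x0 y ^ (k+1)) / Im (Complex x0 y)))))\<^sup>2 / y\<^sup>2)
     \<longlongrightarrow> indicator (Dtilde n x0) t * (\<bar>\<Sum>k=1..n-1. real k * real (k+1) * t k * x0 ^ (k-1)\<bar>)\<^sup>2) (at 0)"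
proof -
  define a where "a y = cmod (Complex x0 y * (\<Sum>k=1..n-1. complex_of_real (t k) *
                 (Complex x0 y ^ k - complex_of_real (Im (Complex x0 y ^ (k+1)) / Im (Complex x0 y)))))" for y
  define b where "b y = \<bar>(1 / Im (Complex x0 y)) * (\<Sum>k=1..n-1. t k * Im (Complex x0 y ^ (k+1)))\<bar>" for y
  define l1 where "l1 = \<bar>\<Sum>k=1..n-1. real k * t k * x0 ^ (k+1)\<bar>"
  define l2 where "l2 = \<bar>\<Sum>k=1..n-1. real (k+1) * t k * x0 ^ k\<bar>"
  define cube where "cube = (\<forall>k\<in>{1..n-1}. \<bar>t k\<bar> \<le> 1)"
  define H where "H y = (\<Sum>k=1..n-1. complex_of_real (t k) * (2 * \<i> * FF k (Complex x0 y) (cnj (Complex x0 y))))" for y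
  define p where "p = (\<Sum>k=1..n-1. real k * real (k+1) * t k * x0 ^ (k-1))"
  have Dz_iff: "t \<in> Dz n (Complex x0 y) \<longleftrightarrow> cube \<and> a y \<le> 1 \<and> b y \<le> 1" for y
    using t by (simp add: Dz_def a_def b_def cube_def)
  have Dt_iff: "t \<in> Dtilde n x0 \<longleftrightarrow> cube \<and> l1 \<le> 1 \<and> l2 \<le> 1"
    using t by (simp add: Dtilde_def l1_def l2_def cube_def)
  have ev0: "eventually (\<lambda>y::real. y \<noteq> 0) (at 0)" by (simp add: eventually_at_filter)
  have a_lim: "(a \<longlongrightarrow> l1) (at 0)"
  proof -
    have "((\<lambda>y. cmod (Complex x0 y * (\<Sum>k=1..n-1. complex_of_real (t k) *
                 (Complex x0 y ^ k - EE k (Complex x0 y) (cnj (Complex x0 y)))))) \<longlongrightarrow>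
          cmod (of_real x0 * (\<Sum>k=1..n-1. complex_of_real (t k) * (of_real x0 ^ k - EE k (of_real x0) (of_real x0))))) (at 0)"
      by (intro tendsto_intros zlim EElim)
    then have "((\<lambda>y. cmod (Complex x0 y * (\<Sum>k=1..n-1. complex_of_real (t k) *
                 (Complex x0 y ^ k - EE k (Complex x0 y) (cnj (Complex x0 y)))))) \<longlongrightarrow> l1) (at 0)"
      unfolding a_val l1_def .
    then show ?thesis
    proof (rule Lim_transform_eventually)
      show "\<forall>\<^sub>F y in at 0. cmod (Complex x0 y * (\<Sum>k=1..n-1. complex_of_real (t k) *
                 (Complex x0 y ^ k - EE k (Complex x0 y) (cnj (Complex x0 y))))) = a y"
        using ev0
      proof eventually_elim
        case (elim y)
        have e: "complex_of_real (Im (Complex x0 y ^ (k+1)) / Im (Complex x0 y)) = EE k (Complex x0 y) (cnj (Complex x0 y))" for k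
          using elim by (intro Im_ratio) simp
        show ?case unfolding a_def e ..
      qed
    qed
  qed
  have b_lim: "(b \<longlongrightarrow> l2) (at 0)"
  proof -
    have "((\<lambda>y. \<bar>\<Sum>k=1..n-1. t k * Re (EE k (Complex x0 y) (cnj (Complex x0 y)))\<bar>) \<longlongrightarrow>
           \<bar>\<Sum>k=1..n-1. t k * Re (EE k (of_real x0) (of_real x0))\<bar>) (at 0)"
      by (intro tendsto_intros EElim)
    then have "((\<lambda>y. \<bar>\<Sum>k=1..n-1. t k * Re (EE k (Complex x0 y) (cnj (Complex x0 y)))\<bar>) \<longlongrightarrow> l2) (at 0)"
      unfolding b_val l2_def .
    then show ?thesis
    proof (rule Lim_transform_eventually)
      show "\<forall>\<^sub>F y in at 0. \<bar>\<Sum>k=1..n-1. t k * Re (EE k (Complex x0 y) (cnj (Complex x0 y)))\<bar> = b y"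
        using ev0
      proof eventually_elim
        case (elim y)
        have "Re (EE k (Complex x0 y) (cnj (Complex x0 y))) = Im (Complex x0 y ^ (k+1)) / Im (Complex x0 y)" for k
          using Im_ratio[of "Complex x0 y" k] elim by (metis Re_complex_of_real complex.sel(2))
        then show ?case by (simp add: b_def sum_distrib_left)
      qed
    qed
  qed
  have ind: "eventually (\<lambda>y. indicator (Dz n (Complex x0 y)) t = (indicator (Dtilde n x0) t :: real)) (at 0)"
  proof (cases cube)
    case False then show ?thesis by (simp add: Dz_iff Dt_iff indicator_def)
  next
    case True
    show ?thesis
    proof (cases "l1 < 1 \<and> l2 < 1")
      case True
      have "eventually (\<lambda>y. a y < 1) (at 0)" using a_lim True by (intro order_tendstoD(2)) auto
      moreover have "eventually (\<lambda>y. b y < 1) (at 0)" using b_lim True by (intro order_tendstoD(2)) auto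
      ultimately have "eventually (\<lambda>y. a y < 1 \<and> b y < 1) (at 0)" by (rule eventually_conj)
      then show ?thesis
        by (rule eventually_mono) (use True \<open>cube\<close> in \<open>simp add: Dz_iff Dt_iff indicator_def\<close>)
    next
      case False
      then have "l1 > 1 \<or> l2 > 1" using L1 L2 unfolding l1_def l2_def by auto
      then show ?thesis
      proof
        assume l: "l1 > 1"
        have "eventually (\<lambda>y. a y > 1) (at 0)" using a_lim l by (intro order_tendstoD(1)) auto
        then show ?thesis by (rule eventually_mono) (use l in \<open>simp add: Dz_iff Dt_iff indicator_def\<close>)
      next
        assume l: "l2 > 1"
        have "eventually (\<lambda>y. b y > 1) (at 0)" using b_lim l by (intro order_tendstoD(1)) auto
        then show ?thesis by (rule eventually_mono) (use l in \<open>simp add: Dz_iff Dt_iff indicator_def\<close>)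
      qed
    qed
  qed
  have H_lim: "((\<lambda>y. indicator (Dtilde n x0) t * (cmod (H y))\<^sup>2) \<longlongrightarrow> indicator (Dtilde n x0) t * \<bar>p\<bar>\<^sup>2) (at 0)"
  proof -
    have "((\<lambda>y. indicator (Dtilde n x0) t * (cmod (H y))\<^sup>2) \<longlongrightarrow> indicator (Dtilde n x0) t *
         (cmod (\<Sum>k=1..n-1. complex_of_real (t k) * (2 * \<i> * FF k (of_real x0) (of_real x0))))\<^sup>2) (at 0)"
      unfolding H_def by (intro tendsto_intros FFlim)
    moreover have c: "cmod (\<i> * complex_of_real p) = \<bar>p\<bar>" by (simp add: norm_mult)
    ultimately show ?thesis unfolding H_val p_def[symmetric] c by blast
  qed
  show ?thesis unfolding p_def[symmetric]
  using H_lim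
  proof (rule Lim_transform_eventually)
    show "\<forall>\<^sub>F y in at 0. indicator (Dtilde n x0) t * (cmod (H y))\<^sup>2 = indicator (Dz n (Complex x0 y)) t *
        (cmod (\<Sum>k=1..n-1. complex_of_real (t k) *
           (of_nat (k+1) * Complex x0 y ^ k - complex_of_real (Im (Complex x0 y ^ (k+1)) / Im (Complex x0 y)))))\<^sup>2 / y\<^sup>2"
      using ev0 ind
    proof eventually_elim
      case (elim y)
      have "(cmod (of_real y * H y))\<^sup>2 / y\<^sup>2 = (cmod (H y))\<^sup>2"
        using elim by (simp add: norm_mult power_mult_distrib)
      then show ?case using elim(2) unfolding S_eq[OF elim(1)] H_def[symmetric] by (simp add: mult.assoc[symmetric] times_divide_eq_right[symmetric])
    qed
  qed
qed



lemma Dz_sets: "Dz n z \<in> sets (lebRn n)"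
  unfolding Dz_def lebRn_def by measurable

lemma Dtilde_sets: "Dtilde n x0 \<in> sets (lebRn n)"
  unfolding Dtilde_def lebRn_def by measurable

lemma G_meas: "(\<lambda>t. indicator (Dz n z) t *
        (cmod (\<Sum>k=1..n-1. complex_of_real (t k) *
           (of_nat (k+1) * z ^ k - complex_of_real (Im (z ^ (k+1)) / Im z))))\<^sup>2 / c) \<in> borel_measurable (lebRn n)"
  using Dz_sets[of n z] unfolding lebRn_def by measurable

lemma f_meas: "(\<lambda>t. indicator (Dtilde n x0) t *
      (\<bar>\<Sum>k=1..n-1. real k * real (k+1) * t k * x0 ^ (k-1)\<bar>)\<^sup>2) \<in> borel_measurable (lebRn n)"
  using Dtilde_sets[of n x0] unfolding lebRn_def by measurable



theorem proposition2:
  fixes n :: nat and x0 :: real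
  assumes "n \<ge> 2"
  shows "(\<lambda>y::real. psi n (Complex x0 y)) \<sim>[at 0] (\<lambda>y. Aconst n x0 * \<bar>y\<bar>)"
proof -
  define M where "M = lebRn n"
  interpret PS: product_sigma_finite "\<lambda>_. lborel :: real measure"
    by (simp add: product_sigma_finite_def lborel.sigma_finite_measure_axioms)
  define G where "G y t = indicator (Dz n (Complex x0 y)) t *
        (cmod (\<Sum>k=1..n-1. complex_of_real (t k) *
           (of_nat (k+1) * Complex x0 y ^ k - complex_of_real (Im (Complex x0 y ^ (k+1)) / Im (Complex x0 y)))))\<^sup>2 / y\<^sup>2" for y t
  define f where "f t = indicator (Dtilde n x0) t * (\<bar>\<Sum>k=1..n-1. real k * real (k+1) * t k * x0 ^ (k-1)\<bar>)\<^sup>2" for t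
  define L1 where "L1 t = (\<Sum>k=1..n-1. real k * t k * x0 ^ (k+1))" for t :: "nat \<Rightarrow> real"
  define L2 where "L2 t = (\<Sum>k=1..n-1. real (k+1) * t k * x0 ^ k)" for t :: "nat \<Rightarrow> real"
  define C where "C = PiE {1..n-1} (\<lambda>_. {-1..1::real})"
  have I_ins: "{1..n-1} = insert 1 {2..n-1}" using assms by auto
  have sp: "space M = PiE {1..n-1} (\<lambda>_. UNIV)" unfolding M_def lebRn_def by (simp add: space_PiM)
  have null_hyp: "{t \<in> space M. (\<Sum>k=1..n-1. c k * t k) = v} \<in> null_sets M" if "c 1 \<noteq> 0" for c v
  proof -
    have "{t \<in> space (PiM (insert 1 {2..n-1}) (\<lambda>_. lborel)). (\<Sum>k\<in>insert 1 {2..n-1}. c k * t k) = v}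
           \<in> null_sets (PiM (insert 1 {2..n-1}) (\<lambda>_. lborel))"
      using that by (intro hyperplane_null) auto
    then show ?thesis unfolding M_def lebRn_def I_ins .
  qed
  have AE_good: "AE t in M. \<bar>L1 t\<bar> \<noteq> 1 \<and> \<bar>L2 t\<bar> \<noteq> 1"
  proof (cases "x0 = 0")
    case True
    then have "L1 t = 0" "L2 t = 0" for t unfolding L1_def L2_def by (auto intro!: sum.neutral)
    then show ?thesis by simp
  next
    case False
    let ?c1 = "\<lambda>k. real k * x0 ^ (k+1)" and ?c2 = "\<lambda>k. real (k+1) * x0 ^ k"
    have e1: "L1 t = (\<Sum>k=1..n-1. ?c1 k * t k)" and e2: "L2 t = (\<Sum>k=1..n-1. ?c2 k * t k)" for t
      unfolding L1_def L2_def by (auto intro!: sum.cong)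
    have c1: "?c1 1 \<noteq> 0" and c2: "?c2 1 \<noteq> 0" using False by auto
    show ?thesis
    proof (rule AE_I')
      show "{t \<in> space M. (\<Sum>k=1..n-1. ?c1 k * t k) = 1} \<union> {t \<in> space M. (\<Sum>k=1..n-1. ?c1 k * t k) = -1}
         \<union> ({t \<in> space M. (\<Sum>k=1..n-1. ?c2 k * t k) = 1} \<union> {t \<in> space M. (\<Sum>k=1..n-1. ?c2 k * t k) = -1})
         \<in> null_sets M"
        using null_hyp[where c="?c1" and v=1, OF c1] null_hyp[where c="?c1" and v="-1", OF c1]
          null_hyp[where c="?c2" and v=1, OF c2] null_hyp[where c="?c2" and v="-1", OF c2]
        by (intro null_sets.Un) auto
      show "{t \<in> space M. \<not> (\<bar>L1 t\<bar> \<noteq> 1 \<and> \<bar>L2 t\<bar> \<noteq> 1)} \<subseteq>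
         {t \<in> space M. (\<Sum>k=1..n-1. ?c1 k * t k) = 1} \<union> {t \<in> space M. (\<Sum>k=1..n-1. ?c1 k * t k) = -1}
         \<union> ({t \<in> space M. (\<Sum>k=1..n-1. ?c2 k * t k) = 1} \<union> {t \<in> space M. (\<Sum>k=1..n-1. ?c2 k * t k) = -1})"
        unfolding e1[symmetric] e2[symmetric] by (auto simp: abs_if split: if_splits)
    qed
  qed
  define h where "h y = (\<Sum>k=1..n-1. cmod (2 * \<i> * FF k (Complex x0 y) (cnj (Complex x0 y))))" for y
  have hcont: "continuous_on (cball 0 1) h"
    unfolding h_def FF_def by (intro continuous_intros)
  obtain B where B: "\<forall>y\<in>cball 0 1. \<bar>h y\<bar> \<le> B"
    using compact_imp_bounded[OF compact_continuous_image[OF hcont compact_cball]]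
    unfolding bounded_iff by auto
  define w where "w t = B\<^sup>2 * indicator C t" for t :: "nat \<Rightarrow> real"
  have dom: "\<bar>G y t\<bar> \<le> w t" if y: "y \<noteq> 0" "\<bar>y\<bar> \<le> 1" and t: "t \<in> space M" for y t
  proof (cases "t \<in> Dz n (Complex x0 y)")
    case False
    then show ?thesis by (simp add: G_def w_def)
  next
    case True
    then have cube: "\<forall>k\<in>{1..n-1}. \<bar>t k\<bar> \<le> 1" by (simp add: Dz_def)
    then have "t \<in> C" using t unfolding C_def sp by (force simp: PiE_def Pi_def abs_le_iff)
    define H where "H = (\<Sum>k=1..n-1. complex_of_real (t k) * (2 * \<i> * FF k (Complex x0 y) (cnj (Complex x0 y))))"
    have G_eq: "G y t = (cmod H)\<^sup>2"
      unfolding G_def S_eq[OF y(1)] H_def[symmetric] using True y(1)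
      by (simp add: norm_mult power_mult_distrib)
    have "cmod H \<le> (\<Sum>k=1..n-1. cmod (complex_of_real (t k) * (2 * \<i> * FF k (Complex x0 y) (cnj (Complex x0 y)))))"
      unfolding H_def by (rule norm_sum)
    also have "\<dots> \<le> h y" unfolding h_def
    proof (intro sum_mono)
      fix k assume "k \<in> {1..n-1}"
      then have "\<bar>t k\<bar> \<le> 1" using cube by auto
      then show "cmod (complex_of_real (t k) * (2 * \<i> * FF k (Complex x0 y) (cnj (Complex x0 y))))
                 \<le> cmod (2 * \<i> * FF k (Complex x0 y) (cnj (Complex x0 y)))"
        by (simp add: norm_mult mult_left_le_one_le)
    qed
    also have "\<dots> \<le> B" using bspec[OF B, of y] y by (simp add: mem_cball_0)
    finally have "cmod H \<le> B" .
    then have "(cmod H)\<^sup>2 \<le> B\<^sup>2" by (intro power_mono) auto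
    then show ?thesis using G_eq \<open>t \<in> C\<close> by (simp add: w_def)
  qed
  have C_sets: "C \<in> sets M" unfolding C_def M_def lebRn_def by (intro sets_PiM_I_finite) auto
  have C_fin: "emeasure M C < \<infinity>"
    unfolding C_def M_def lebRn_def by (subst PS.emeasure_PiM) (auto simp: ennreal_prod_eq_top power_less_top_ennreal)
  have w_int: "integrable M w"
    unfolding w_def using C_sets C_fin
    by (intro integrable_mult_right) (simp add: integrable_indicator_iff sets.Int_space_eq2[OF C_sets])
  have G_meas: "G y \<in> borel_measurable M" for y
    unfolding G_def M_def by (rule G_meas)
  have f_meas: "f \<in> borel_measurable M"
    unfolding f_def M_def by (rule f_meas)
  have seq: "integrable M f \<and> (\<lambda>i. integral\<^sup>L M (G (X i))) \<longlonglongrightarrow> integral\<^sup>L M f"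
    if X: "\<And>i. X i \<in> ball 0 1 - {0}" "X \<longlonglongrightarrow> 0" for X :: "nat \<Rightarrow> real"
  proof -
    have Xat: "filterlim X (at 0) sequentially"
      using X by (intro filterlim_atI) auto
    have lim: "AE t in M. (\<lambda>i. G (X i) t) \<longlonglongrightarrow> f t"
      using AE_good AE_space
    proof eventually_elim
      case (elim t)
      then show ?case
        unfolding G_def f_def
        by (intro filterlim_compose[OF pointwise Xat]) (auto simp: M_def L1_def L2_def)
    qed
    have bound: "AE t in M. norm (G (X i) t) \<le> w t" for i
      using X(1)[of i] by (intro AE_I2) (auto intro!: dom)
    show ?thesis
      using integrable_dominated_convergence[OF f_meas G_meas w_int lim bound]
            integral_dominated_convergence[OF f_meas G_meas w_int lim bound] by blast
  qed
  have f_int: "integrable M f"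
  proof -
    have l: "(\<lambda>i. inverse (real (Suc i)) / 2) \<longlonglongrightarrow> 0"
      using tendsto_divide_zero[OF LIMSEQ_inverse_real_of_nat, of 2] by simp
    have m: "inverse (real (Suc i)) / 2 \<in> ball 0 1 - {0}" for i
    proof -
      have "inverse (real (Suc i)) \<le> 1" by (simp add: field_simps)
      moreover have "inverse (real (Suc i)) > 0" by simp
      ultimately show ?thesis by (simp add: dist_real_def)
    qed
    show ?thesis by (rule conjunct1[OF seq[of "\<lambda>i. inverse (real (Suc i)) / 2", OF m l]])
  qed
  have Glim: "((\<lambda>y. integral\<^sup>L M (G y)) \<longlongrightarrow> integral\<^sup>L M f) (at 0)"
  proof -
    have "((\<lambda>y. integral\<^sup>L M (G y)) \<longlongrightarrow> integral\<^sup>L M f) (at 0 within ball 0 1)"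
      unfolding tendsto_at_iff_sequentially comp_def
    proof (intro allI impI)
      fix X :: "nat \<Rightarrow> real" assume X1: "\<forall>i. X i \<in> ball 0 1 - {0}" and X2: "X \<longlonglongrightarrow> 0"
      show "(\<lambda>i. integral\<^sup>L M (G (X i))) \<longlonglongrightarrow> integral\<^sup>L M f"
        by (rule conjunct2[OF seq[of X, OF _ X2]]) (use X1 in blast)
    qed
    moreover have "at (0::real) within ball 0 1 = at 0" by (rule at_within_open) auto
    ultimately show ?thesis by simp
  qed
  have A_eq: "Aconst n x0 = integral\<^sup>L M f" unfolding Aconst_def f_def M_def ..
  have A_pos: "Aconst n x0 > 0"
  proof (rule ccontr)
    assume "\<not> Aconst n x0 > 0"
    moreover have "Aconst n x0 \<ge> 0" unfolding A_eq by (rule integral_nonneg_AE, rule AE_I2) (simp add: f_def)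
    ultimately have "integral\<^sup>L M f = 0" using A_eq by simp
    then have f0: "AE t in M. f t = 0"
      using integral_nonneg_eq_0_iff_AE[OF f_int] by (simp add: f_def)
    let ?c = "\<lambda>k. real k * real (k+1) * x0 ^ (k-1)"
    have p0: "AE t in M. (\<Sum>k=1..n-1. real k * real (k+1) * t k * x0 ^ (k-1)) \<noteq> 0"
    proof (rule AE_I')
      show "{t \<in> space M. (\<Sum>k=1..n-1. ?c k * t k) = 0} \<in> null_sets M"
        by (intro null_hyp) simp
      have "(\<Sum>k=1..n-1. real k * real (k+1) * t k * x0 ^ (k-1)) = (\<Sum>k=1..n-1. ?c k * t k)" for t :: "nat \<Rightarrow> real"
        by (intro sum.cong) auto
      then show "{t \<in> space M. \<not> (\<Sum>k=1..n-1. real k * real (k+1) * t k * x0 ^ (k-1)) \<noteq> 0}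
          \<subseteq> {t \<in> space M. (\<Sum>k=1..n-1. ?c k * t k) = 0}" by auto
    qed
    define K where "K = (\<Sum>k=1..n-1. real k * \<bar>x0\<bar> ^ (k+1)) + (\<Sum>k=1..n-1. real (k+1) * \<bar>x0\<bar> ^ k)"
    have K0: "K \<ge> 0" unfolding K_def by (intro add_nonneg_nonneg sum_nonneg) auto
    define \<delta> where "\<delta> = 1 / (1 + K)"
    have d0: "\<delta> > 0" and d1: "\<delta> \<le> 1" and dK: "\<delta> * K \<le> 1" using K0 by (auto simp: \<delta>_def field_simps)
    define Bx where "Bx = PiE {1..n-1} (\<lambda>_. {-\<delta>..\<delta>})"
    have Bx_sub: "Bx \<subseteq> Dtilde n x0"
    proof
      fix t assume t: "t \<in> Bx"
      then have tk: "\<bar>t k\<bar> \<le> \<delta>" if "k \<in> {1..n-1}" for k using that by (auto simp: Bx_def PiE_def Pi_def)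
      have ts: "t \<in> space (lebRn n)" using t sp unfolding M_def Bx_def by (auto simp: PiE_def Pi_def)
      have "\<bar>\<Sum>k=1..n-1. real k * t k * x0 ^ (k+1)\<bar> \<le> (\<Sum>k=1..n-1. \<bar>real k * t k * x0 ^ (k+1)\<bar>)"
        by (rule sum_abs)
      also have "\<dots> \<le> (\<Sum>k=1..n-1. \<delta> * (real k * \<bar>x0\<bar> ^ (k+1)))"
        using tk by (intro sum_mono) (auto simp: abs_mult power_abs intro!: mult_right_mono)
      also have "\<dots> \<le> \<delta> * K" unfolding K_def sum_distrib_left[symmetric] using d0
        by (intro mult_left_mono) (auto intro!: sum_nonneg)
      finally have 1: "\<bar>\<Sum>k=1..n-1. real k * t k * x0 ^ (k+1)\<bar> \<le> 1" using dK by linarith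
      have "\<bar>\<Sum>k=1..n-1. real (k+1) * t k * x0 ^ k\<bar> \<le> (\<Sum>k=1..n-1. \<bar>real (k+1) * t k * x0 ^ k\<bar>)"
        by (rule sum_abs)
      also have "\<dots> \<le> (\<Sum>k=1..n-1. \<delta> * (real (k+1) * \<bar>x0\<bar> ^ k))"
        using tk by (intro sum_mono) (auto simp: abs_mult power_abs intro!: mult_right_mono)
      also have "\<dots> \<le> \<delta> * K" unfolding K_def sum_distrib_left[symmetric] using d0
        by (intro mult_left_mono) (auto intro!: sum_nonneg)
      finally have 2: "\<bar>\<Sum>k=1..n-1. real (k+1) * t k * x0 ^ k\<bar> \<le> 1" using dK by linarith
      have c: "\<forall>k\<in>{1..n-1}. \<bar>t k\<bar> \<le> 1" using tk d1 by (blast intro: order_trans)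
      show "t \<in> Dtilde n x0" unfolding Dtilde_def using ts 1 2 c by blast
    qed
    have "AE t in M. t \<notin> Bx"
      using f0 p0
    proof eventually_elim
      case (elim t)
      then show ?case using Bx_sub by (auto simp: f_def indicator_def)
    qed
    moreover have Bx_sets: "Bx \<in> sets M" unfolding Bx_def M_def lebRn_def by (intro sets_PiM_I_finite) auto
    moreover have "Bx \<subseteq> space M" unfolding Bx_def sp by (auto simp: PiE_def Pi_def)
    ultimately have "emeasure M Bx = 0"
      by (subst (asm) AE_iff_measurable[of Bx]) auto
    moreover have "emeasure M Bx = (\<Prod>k\<in>{1..n-1}. ennreal (2 * \<delta>))"
      unfolding Bx_def M_def lebRn_def using d0 by (subst PS.emeasure_PiM) auto
    moreover have "(\<Prod>k\<in>{1..n-1}. ennreal (2 * \<delta>)) \<noteq> 0" using d0 by (simp add: prod_zero_iff)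
    ultimately show False by simp
  qed
  show ?thesis
  proof (rule asymp_equivI')
    have "((\<lambda>y. integral\<^sup>L M (G y) / Aconst n x0) \<longlongrightarrow> integral\<^sup>L M f / Aconst n x0) (at 0)"
      by (intro tendsto_intros Glim) (use A_pos in auto)
    then have 1: "((\<lambda>y. integral\<^sup>L M (G y) / Aconst n x0) \<longlongrightarrow> 1) (at 0)"
      using A_pos A_eq by simp
    show "((\<lambda>y. psi n (Complex x0 y) / (Aconst n x0 * \<bar>y\<bar>)) \<longlongrightarrow> 1) (at 0)"
      using 1
    proof (rule Lim_transform_eventually)
      show "\<forall>\<^sub>F y in at 0. integral\<^sup>L M (G y) / Aconst n x0 = psi n (Complex x0 y) / (Aconst n x0 * \<bar>y\<bar>)"
        unfolding eventually_at_filter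
      proof (intro always_eventually allI impI)
        fix y :: real assume y: "y \<noteq> 0"
        have "integral\<^sup>L M (G y) = psi n (Complex x0 y) * \<bar>y\<bar> / y\<^sup>2"
          unfolding G_def psi_def M_def integral_divide_zero using y by simp
        also have "\<dots> = psi n (Complex x0 y) / \<bar>y\<bar>"
          using y by (simp add: power2_eq_square field_simps)
        finally show "integral\<^sup>L M (G y) / Aconst n x0 = psi n (Complex x0 y) / (Aconst n x0 * \<bar>y\<bar>)"
          by simp
      qed
    qed
  qed
qed


end
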